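(* Let $d\ge 1$ and $n\ge 1$ be integers, and let $g\in\mathbb{R}[x_1,\dots,x_d]$ be a form (homogeneous polynomial) of degree $2n$ such that $g(\mathbf{x})\ge 0$ for all $\mathbf{x}\in\mathbb{R}^d$ and $g(\mathbf{x})=0$ only if $\mathbf{x}=0$. Let $\mu$ be the measure on $\mathbb{R}^d$ with $d\mu(\mathbf{x})=\exp(-g(\mathbf{x}))\,d\mathbf{x}$, and let $c_{2n}:=1+\frac{d}{2n}$. Let $\{P_{\boldsymbol{\alpha}}:\boldsymbol{\alpha}\in\mathbb{N}^d_{2n}\}$ be any basis of the space $\mathcal{H}[\mathbf{x}]_{2n}$ of degree-$2n$ forms which is orthonormal with respect to $\mu$, i.e. $\int P_{\boldsymbol{\alpha}}P_{\boldsymbol{\beta}}\,d\mu=\delta_{\boldsymbol{\alpha}\boldsymbol{\beta}}$ for all $\boldsymbol{\alpha},\boldsymbol{\beta}\in\mathbb{N}^d_{2n}$. Set $\mathbb{P}_{2n}(\mathbf{x}):=(P_{\boldsymbol{\alpha}}(\mathbf{x}))_{\boldsymbol{\alpha}\in\mathbb{N}^d_{2n}}$, let $\tilde{\mathbf{g}}$ be the coefficient vector of $g$ in this basis (so $g(\mathbf{x})=\langle\tilde{\mathbf{g}},\mathbb{P}_{2n}(\mathbf{x})\rangle$), let $\tilde{\boldsymbol{\mu}}^{(2n)}:=\int\mathbb{P}_{2n}(\mathbf{x})\,d\mu(\mathbf{x})$, and let $K^\mu_{2n}(\mathbf{x},\mathbf{y}):=\sum_{\boldsymbol{\alpha}\in\mathbb{N}^d_{2n}}P_{\boldsymbol{\alpha}}(\mathbf{x})P_{\boldsymbol{\alpha}}(\mathbf{y})$.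 Then \[\tilde{\mathbf{g}}=c_{2n}\,\tilde{\boldsymbol{\mu}}^{(2n)}=c_{2n}\int_{\mathbb{R}^d}\mathbb{P}_{2n}(\mathbf{x})\,\exp(-\langle\mathbb{P}_{2n}(\mathbf{x}),\tilde{\mathbf{g}}\rangle)\,d\mathbf{x},\] \[g(\mathbf{x})=c_{2n}\,\langle\mathbb{P}_{2n}(\mathbf{x}),\tilde{\boldsymbol{\mu}}^{(2n)}\rangle=c_{2n}\int K^\mu_{2n}(\mathbf{x},\mathbf{y})\,d\mu(\mathbf{y})\quad\text{for all }\mathbf{x}\in\mathbb{R}^d,\] \[\tilde{\boldsymbol{\mu}}^{(2n)}=\int_{\mathbb{R}^d}\mathbb{P}_{2n}(\mathbf{x})\,\exp\big(-c_{2n}\,\langle\mathbb{P}_{2n}(\mathbf{x}),\tilde{\boldsymbol{\mu}}^{(2n)}\rangle\big)\,d\mathbf{x}.\]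
   Context: $\mathbb{N}^d_{2n}=\{\boldsymbol{\alpha}\in\mathbb{N}^d:\sum_i\alpha_i=2n\}$. $\mathcal{H}[\mathbf{x}]_{2n}$ denotes the real vector space of homogeneous polynomials of degree $2n$ in $\mathbf{x}=(x_1,\dots,x_d)$, of dimension $\binom{d-1+2n}{2n}$. The degree-$2n$ moment matrix $\int \mathbf{v}_{2n}\mathbf{v}_{2n}^T d\mu$ (with $\mathbf{v}_{2n}(\mathbf{x})=(\mathbf{x}^{\boldsymbol{\alpha}})_{\boldsymbol{\alpha}\in\mathbb{N}^d_{2n}}$) is positive definite, so a $\mu$-orthonormal basis of $\mathcal{H}[\mathbf{x}]_{2n}$ exists. *)

theory Defs
  imports "HOL-Analysis.Analysis"
begin

text \<open>Multi-indices alpha in N^d with |alpha| = m; the dimension d is the finite index type 'd.\<close>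
definition multi_idx :: "nat \<Rightarrow> ('d::finite \<Rightarrow> nat) set" where
  "multi_idx m = {\<alpha>. (\<Sum>i\<in>UNIV. \<alpha> i) = m}"

definition monom :: "('d::finite \<Rightarrow> nat) \<Rightarrow> real^'d \<Rightarrow> real" where
  "monom \<alpha> x = (\<Prod>i\<in>UNIV. (x $ i) ^ (\<alpha> i))"

definition hom_form :: "nat \<Rightarrow> (real^'d::finite \<Rightarrow> real) \<Rightarrow> bool" where
  "hom_form m f \<longleftrightarrow>
     (\<exists>c. \<forall>x. f x = (\<Sum>\<alpha>\<in>(multi_idx m :: ('d \<Rightarrow> nat) set). c \<alpha> * monom \<alpha> x))"

end

theory Submission
  imports Defs
begin


lemma nn_integral_scale:
  fixes h :: "real^'d::finite \<Rightarrow> ennreal"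
  assumes [measurable]: "h \<in> borel_measurable borel" and r: "r > 0"
  shows "(\<integral>\<^sup>+x. h x \<partial>lborel) = ennreal (r ^ CARD('d)) * (\<integral>\<^sup>+x. h (r *\<^sub>R x) \<partial>lborel)"
  using r
  by (subst lborel_affine[of r 0]) (simp_all add: nn_integral_density nn_integral_distr nn_integral_cmult)

lemma exp_tail:
  fixes a :: real assumes a: "a > 0"
  shows "(\<integral>\<^sup>+t. ennreal (exp (- a * t)) * indicator {1..} t \<partial>lborel) = ennreal (exp (- a) / a)"
  using nn_integral_has_integral_lebesgue'[OF _ has_integral_exp_minus_to_infinity[OF a, of 1]] by simp

lemma powr_tail:
  fixes e :: real assumes e: "e < -1"
  shows "(\<integral>\<^sup>+t. ennreal (t powr e) * indicator {1..} t \<partial>lborel) = ennreal (-1 / (e + 1))"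
  using nn_integral_has_integral_lebesgue'[OF _ has_integral_powr_to_inf[OF e, of 1]] by simp



lemma key_scaling:
  fixes f g :: "real^'d::finite \<Rightarrow> real" and k m :: nat and t :: real
  assumes fm[measurable]: "f \<in> borel_measurable borel" and gm[measurable]: "g \<in> borel_measurable borel"
    and fh: "\<And>r x. r > 0 \<Longrightarrow> f (r *\<^sub>R x) = r ^ k * f x"
    and gh: "\<And>r x. r > 0 \<Longrightarrow> g (r *\<^sub>R x) = r ^ m * g x"
    and m: "m > 0" and t: "t > 0"
  shows "(\<integral>\<^sup>+x. ennreal (f x) * ennreal (g x) * ennreal (exp (- t * g x)) \<partial>lborel)
     = ennreal (t powr (- real (k + m + CARD('d)) / real m)) *
       (\<integral>\<^sup>+x. ennreal (f x) * ennreal (g x) * ennreal (exp (- g x)) \<partial>lborel)"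
proof -
  define r where "r = t powr (1 / real m)"
  have r: "r > 0" using t by (simp add: r_def)
  have rm: "r ^ m = t" using t m by (simp add: r_def powr_realpow[symmetric] powr_powr)
  let ?I = "\<integral>\<^sup>+x. ennreal (f x) * ennreal (g x) * ennreal (exp (- t * g x)) \<partial>lborel"
  let ?G = "\<integral>\<^sup>+x. ennreal (f x) * ennreal (g x) * ennreal (exp (- g x)) \<partial>lborel"
  have "?G = ennreal (r ^ CARD('d)) * (\<integral>\<^sup>+x. ennreal (f (r *\<^sub>R x)) * ennreal (g (r *\<^sub>R x)) * ennreal (exp (- g (r *\<^sub>R x))) \<partial>lborel)"
    by (rule nn_integral_scale[OF _ r]) measurable
  also have "(\<integral>\<^sup>+x. ennreal (f (r *\<^sub>R x)) * ennreal (g (r *\<^sub>R x)) * ennreal (exp (- g (r *\<^sub>R x))) \<partial>lborel)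
      = (\<integral>\<^sup>+x. ennreal (r ^ (k + m)) * (ennreal (f x) * ennreal (g x) * ennreal (exp (- t * g x))) \<partial>lborel)"
  proof (rule nn_integral_cong)
    fix x
    have "ennreal (f (r *\<^sub>R x)) = ennreal (r ^ k) * ennreal (f x)"
      using r by (simp add: fh ennreal_mult')
    moreover have "ennreal (g (r *\<^sub>R x)) = ennreal (r ^ m) * ennreal (g x)"
      using r by (simp add: gh ennreal_mult')
    moreover have "- g (r *\<^sub>R x) = - t * g x" using r by (simp add: gh rm)
    moreover have "ennreal (r ^ (k + m)) = ennreal (r ^ k) * ennreal (r ^ m)"
      using r by (simp add: power_add ennreal_mult)
    ultimately show "ennreal (f (r *\<^sub>R x)) * ennreal (g (r *\<^sub>R x)) * ennreal (exp (- g (r *\<^sub>R x)))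
      = ennreal (r ^ (k + m)) * (ennreal (f x) * ennreal (g x) * ennreal (exp (- t * g x)))"
      by (simp add: mult_ac)
  qed
  also have "\<dots> = ennreal (r ^ (k + m)) * ?I"
    by (rule nn_integral_cmult) measurable
  finally have G: "?G = ennreal (r ^ (k + m + CARD('d))) * ?I"
    using r by (simp add: mult.assoc[symmetric] ennreal_mult[symmetric] power_add[symmetric] add_ac)
  have "t powr (- real (k + m + CARD('d)) / real m) * r ^ (k + m + CARD('d)) = 1"
  proof -
    have "r ^ (k + m + CARD('d)) = t powr (real (k + m + CARD('d)) / real m)"
      using t by (simp add: r_def powr_realpow[symmetric] powr_powr)
    moreover have "- real (k + m + CARD('d)) / real m + real (k + m + CARD('d)) / real m = 0"
      by (simp add: divide_simps)
    ultimately show ?thesis using t by (simp only: powr_add[symmetric]) simp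
  qed
  then have "ennreal (t powr (- real (k + m + CARD('d)) / real m)) * ennreal (r ^ (k + m + CARD('d))) = 1"
    using r by (simp add: ennreal_mult[symmetric])
  then show ?thesis unfolding G by (simp add: mult.assoc[symmetric])
qed



lemma key_identity:
  fixes f g :: "real^'d::finite \<Rightarrow> real" and k m :: nat
  assumes fm[measurable]: "f \<in> borel_measurable borel" and gm[measurable]: "g \<in> borel_measurable borel"
    and fh: "\<And>r x. r > 0 \<Longrightarrow> f (r *\<^sub>R x) = r ^ k * f x"
    and gh: "\<And>r x. r > 0 \<Longrightarrow> g (r *\<^sub>R x) = r ^ m * g x"
    and m: "m > 0" and f0: "f 0 = 0"
    and gpos: "\<And>x. x \<noteq> 0 \<Longrightarrow> g x > 0"
  shows "(\<integral>\<^sup>+x. ennreal (f x) * ennreal (g x) * ennreal (exp (- g x)) \<partial>lborel)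
     = ennreal (real (k + CARD('d)) / real m) * (\<integral>\<^sup>+x. ennreal (f x) * ennreal (exp (- g x)) \<partial>lborel)"
proof -
  let ?G = "\<integral>\<^sup>+x. ennreal (f x) * ennreal (g x) * ennreal (exp (- g x)) \<partial>lborel"
  let ?F = "\<integral>\<^sup>+x. ennreal (f x) * ennreal (exp (- g x)) \<partial>lborel"
  define e where "e = - real (k + m + CARD('d)) / real m"
  have e1: "e + 1 = - real (k + CARD('d)) / real m" using m by (simp add: e_def field_simps)
  have kd: "real (k + CARD('d)) > 0" using zero_less_card_finite[where 'a='d] by linarith
  have "real (k + CARD('d)) / real m > 0" using kd m by simp
  then have elt: "e < -1" using e1 by linarith
  have "?F = (\<integral>\<^sup>+x. (\<integral>\<^sup>+t. ennreal (f x) * ennreal (g x) * ennreal (exp (- t * g x)) * indicator {1..} t \<partial>lborel) \<partial>lborel)"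
  proof (rule nn_integral_cong)
    fix x :: "real^'d"
    show "ennreal (f x) * ennreal (exp (- g x)) =
      (\<integral>\<^sup>+t. ennreal (f x) * ennreal (g x) * ennreal (exp (- t * g x)) * indicator {1..} t \<partial>lborel)"
    proof (cases "x = 0")
      case True then show ?thesis by (simp add: f0)
    next
      case False
      then have gx: "g x > 0" by (rule gpos)
      have "(\<integral>\<^sup>+t. ennreal (f x) * ennreal (g x) * ennreal (exp (- t * g x)) * indicator {1..} t \<partial>lborel)
          = (\<integral>\<^sup>+t. (ennreal (f x) * ennreal (g x)) * (ennreal (exp (- g x * t)) * indicator {1..} t) \<partial>lborel)"
        by (rule nn_integral_cong) (simp add: mult_ac)
      also have "\<dots> = ennreal (f x) * ennreal (g x) * (\<integral>\<^sup>+t. ennreal (exp (- g x * t)) * indicator {1..} t \<partial>lborel)"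
        by (rule nn_integral_cmult) measurable
      also have "\<dots> = ennreal (f x) * ennreal (g x) * ennreal (exp (- g x) / g x)"
        by (subst exp_tail[OF gx]) (rule refl)
      also have "\<dots> = ennreal (f x) * ennreal (exp (- g x))"
        using gx by (simp add: mult.assoc ennreal_mult[symmetric])
      finally show ?thesis by simp
    qed
  qed
  also have "\<dots> = (\<integral>\<^sup>+t. (\<integral>\<^sup>+x. ennreal (f x) * ennreal (g x) * ennreal (exp (- t * g x)) * indicator {1..} t \<partial>lborel) \<partial>lborel)"
    by (rule lborel_pair.Fubini'[symmetric]) measurable
  also have "\<dots> = (\<integral>\<^sup>+t. ennreal (t powr e) * indicator {1..} t * ?G \<partial>lborel)"
  proof (rule nn_integral_cong)
    fix t :: real
    show "(\<integral>\<^sup>+x. ennreal (f x) * ennreal (g x) * ennreal (exp (- t * g x)) * indicator {1..} t \<partial>lborel)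
       = ennreal (t powr e) * indicator {1..} t * ?G"
    proof (cases "t \<ge> 1")
      case False then show ?thesis by (simp add: indicator_def)
    next
      case True
      then have "t > 0" by simp
      have "(\<integral>\<^sup>+x. ennreal (f x) * ennreal (g x) * ennreal (exp (- t * g x)) * indicator {1..} t \<partial>lborel)
          = (\<integral>\<^sup>+x. ennreal (f x) * ennreal (g x) * ennreal (exp (- t * g x)) \<partial>lborel)"
        using True by (simp add: indicator_def)
      also have "\<dots> = ennreal (t powr e) * ?G"
        unfolding e_def by (rule key_scaling[OF fm gm fh gh m \<open>t > 0\<close>])
      finally show ?thesis using True by (simp add: indicator_def)
    qed
  qed
  also have "\<dots> = (\<integral>\<^sup>+t. ennreal (t powr e) * indicator {1..} t \<partial>lborel) * ?G"
    by (rule nn_integral_multc) measurable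
  also have "\<dots> = ennreal (real m / real (k + CARD('d))) * ?G"
  proof -
    have "-1 / (e + 1) = real m / real (k + CARD('d))" using m kd unfolding e1 by (simp add: field_simps)
    then show ?thesis by (simp only: powr_tail[OF elt])
  qed
  finally have FG: "?F = ennreal (real m / real (k + CARD('d))) * ?G" .
  have "ennreal (real (k + CARD('d)) / real m) * ennreal (real m / real (k + CARD('d))) = 1"
    using m kd by (simp add: ennreal_mult[symmetric] del: of_nat_add)
  then show ?thesis unfolding FG by (simp add: mult.assoc[symmetric])
qed



lemma finite_multi_idx: "finite (multi_idx m :: ('d::finite \<Rightarrow> nat) set)"
proof -
  have "multi_idx m \<subseteq> (PiE UNIV (\<lambda>_. {..m}) :: ('d \<Rightarrow> nat) set)"
  proof
    fix \<alpha> :: "'d \<Rightarrow> nat" assume "\<alpha> \<in> multi_idx m"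
    then have s: "(\<Sum>i\<in>UNIV. \<alpha> i) = m" by (simp add: multi_idx_def)
    have "\<alpha> i \<le> m" for i
      using member_le_sum[of i UNIV \<alpha>] s by simp
    then show "\<alpha> \<in> PiE UNIV (\<lambda>_. {..m})" by auto
  qed
  moreover have "finite (PiE UNIV (\<lambda>_. {..m}) :: ('d \<Rightarrow> nat) set)"
    by (rule finite_PiE) auto
  ultimately show ?thesis by (rule finite_subset)
qed

lemma monom_scale:
  assumes "\<alpha> \<in> multi_idx m"
  shows "monom \<alpha> (r *\<^sub>R x) = r ^ m * monom \<alpha> x"
proof -
  have "monom \<alpha> (r *\<^sub>R x) = (\<Prod>i\<in>UNIV. r ^ \<alpha> i * (x $ i) ^ \<alpha> i)"
    by (simp add: monom_def power_mult_distrib)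
  also have "\<dots> = (\<Prod>i\<in>UNIV. r ^ \<alpha> i) * monom \<alpha> x"
    by (simp add: monom_def prod.distrib)
  also have "(\<Prod>i\<in>UNIV. r ^ \<alpha> i) = r ^ m"
    using assms by (simp add: multi_idx_def power_sum[symmetric])
  finally show ?thesis .
qed

lemma hom_form_scale:
  fixes f :: "real^'d::finite \<Rightarrow> real"
  assumes "hom_form m f"
  shows "f (r *\<^sub>R x) = r ^ m * f x"
proof -
  obtain c where c: "\<And>x. f x = (\<Sum>\<alpha>\<in>(multi_idx m :: ('d \<Rightarrow> nat) set). c \<alpha> * monom \<alpha> x)"
    using assms unfolding hom_form_def by blast
  show ?thesis unfolding c
    by (simp add: monom_scale sum_distrib_left mult_ac cong: sum.cong)
qed

lemma hom_form_zero:
  fixes f :: "real^'d::finite \<Rightarrow> real"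
  assumes "hom_form m f" "m > 0"
  shows "f 0 = 0"
proof -
  have "f 0 = 2 ^ m * f 0" using hom_form_scale[OF assms(1), of 2 0] by simp
  moreover have "(2::real) ^ m > 1" using assms(2) by (simp add: one_less_power)
  ultimately have "((2::real) ^ m - 1) * f 0 = 0" "((2::real) ^ m - 1) \<noteq> 0"
    by (simp_all add: algebra_simps)
  then show ?thesis by simp
qed

lemma hom_form_cont:
  assumes "hom_form m (f :: real^'d::finite \<Rightarrow> real)"
  shows "continuous_on UNIV f"
proof -
  obtain c where c: "\<And>x. f x = (\<Sum>\<alpha>\<in>(multi_idx m :: ('d \<Rightarrow> nat) set). c \<alpha> * monom \<alpha> x)"
    using assms unfolding hom_form_def by blast
  have "f = (\<lambda>x. \<Sum>\<alpha>\<in>(multi_idx m :: ('d \<Rightarrow> nat) set). c \<alpha> * (\<Prod>i\<in>UNIV. (x $ i) ^ (\<alpha> i)))"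
    using c by (simp add: monom_def fun_eq_iff)
  moreover have "continuous_on UNIV (\<lambda>x::real^'d. \<Sum>\<alpha>\<in>(multi_idx m :: ('d \<Rightarrow> nat) set). c \<alpha> * (\<Prod>i\<in>UNIV. (x $ i) ^ (\<alpha> i)))"
    by (intro continuous_intros)
  ultimately show ?thesis by simp
qed

lemma hom_form_meas:
  assumes "hom_form m (f :: real^'d::finite \<Rightarrow> real)"
  shows "f \<in> borel_measurable borel"
  using hom_form_cont[OF assms] by (rule borel_measurable_continuous_onI)



lemma key_mu:
  fixes f g :: "real^'d::finite \<Rightarrow> real" and k m :: nat
  assumes fm[measurable]: "f \<in> borel_measurable borel" and gm[measurable]: "g \<in> borel_measurable borel"
    and fh: "\<And>r x. r > 0 \<Longrightarrow> f (r *\<^sub>R x) = r ^ k * f x"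
    and gh: "\<And>r x. r > 0 \<Longrightarrow> g (r *\<^sub>R x) = r ^ m * g x"
    and m: "m > 0" and f0: "f 0 = 0"
    and gpos: "\<And>x. x \<noteq> 0 \<Longrightarrow> g x > 0" and gnn: "\<And>x. g x \<ge> 0"
    and int1: "integrable (density lborel (\<lambda>x. ennreal (exp (- g x)))) (\<lambda>x. f x * g x)"
    and int2: "integrable (density lborel (\<lambda>x. ennreal (exp (- g x)))) f"
  shows "(\<integral>x. f x * g x \<partial>density lborel (\<lambda>x. ennreal (exp (- g x))))
     = real (k + CARD('d)) / real m * (\<integral>x. f x \<partial>density lborel (\<lambda>x. ennreal (exp (- g x))))"
proof -
  let ?\<mu> = "density lborel (\<lambda>x. ennreal (exp (- g x)))"
  let ?c = "real (k + CARD('d)) / real m"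
  have nn: "(\<integral>\<^sup>+x. ennreal (h x * g x) \<partial>?\<mu>) = ennreal ?c * (\<integral>\<^sup>+x. ennreal (h x) \<partial>?\<mu>)"
    if hm[measurable]: "h \<in> borel_measurable borel"
      and hh: "\<And>r x. r > 0 \<Longrightarrow> h (r *\<^sub>R x) = r ^ k * h x" and h0: "h 0 = 0"
    for h :: "real^'d \<Rightarrow> real"
  proof -
    have "(\<integral>\<^sup>+x. ennreal (h x * g x) \<partial>?\<mu>) = (\<integral>\<^sup>+x. ennreal (exp (- g x)) * ennreal (h x * g x) \<partial>lborel)"
      by (rule nn_integral_density) measurable
    also have "\<dots> = (\<integral>\<^sup>+x. ennreal (h x) * ennreal (g x) * ennreal (exp (- g x)) \<partial>lborel)"
    proof (rule nn_integral_cong)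
      fix x
      have "ennreal (h x * g x) = ennreal (h x) * ennreal (g x)" by (rule ennreal_mult''[OF gnn])
      then show "ennreal (exp (- g x)) * ennreal (h x * g x) = ennreal (h x) * ennreal (g x) * ennreal (exp (- g x))"
        by (simp add: mult_ac)
    qed
    also have "\<dots> = ennreal ?c * (\<integral>\<^sup>+x. ennreal (h x) * ennreal (exp (- g x)) \<partial>lborel)"
      by (rule key_identity[OF hm gm hh gh m h0 gpos])
    also have "(\<integral>\<^sup>+x. ennreal (h x) * ennreal (exp (- g x)) \<partial>lborel) = (\<integral>\<^sup>+x. ennreal (h x) \<partial>?\<mu>)"
      by (subst nn_integral_density) (measurable, simp add: mult_ac)
    finally show ?thesis .
  qed
  have A: "(\<integral>\<^sup>+x. ennreal (f x * g x) \<partial>?\<mu>) = ennreal ?c * (\<integral>\<^sup>+x. ennreal (f x) \<partial>?\<mu>)"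
    by (rule nn[OF fm fh f0])
  have B: "(\<integral>\<^sup>+x. ennreal (- (f x * g x)) \<partial>?\<mu>) = ennreal ?c * (\<integral>\<^sup>+x. ennreal (- f x) \<partial>?\<mu>)"
    using nn[of "\<lambda>x. - f x"] fh f0 by simp
  have c0: "?c \<ge> 0" by simp
  show ?thesis
    unfolding real_lebesgue_integral_def[OF int1] real_lebesgue_integral_def[OF int2] A B
    using c0 by (simp add: enn2real_mult right_diff_distrib)
qed

lemma abs_prod_le: "\<bar>a * b\<bar> \<le> a * a + b * (b::real)"
proof -
  have "0 \<le> (\<bar>a\<bar> - \<bar>b\<bar>)^2" by simp
  then have "2 * (\<bar>a\<bar> * \<bar>b\<bar>) \<le> \<bar>a\<bar> * \<bar>a\<bar> + \<bar>b\<bar> * \<bar>b\<bar>"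
    by (simp add: power2_eq_square algebra_simps)
  moreover have "0 \<le> \<bar>a\<bar> * \<bar>b\<bar>" by simp
  moreover have "\<bar>a\<bar> * \<bar>a\<bar> = a * a" "\<bar>b\<bar> * \<bar>b\<bar> = b * b" by (simp_all add: abs_mult_self_eq)
  ultimately show ?thesis unfolding abs_mult by linarith
qed

lemma abs_le_sq: "\<bar>a\<bar> \<le> 1 + a * (a::real)"
  using abs_prod_le[of a 1] by simp



theorem theorem2p2:
  fixes n :: nat
    and g :: "real^'d::finite \<Rightarrow> real"
    and P :: "('d \<Rightarrow> nat) \<Rightarrow> real^'d \<Rightarrow> real"
    and gt :: "('d \<Rightarrow> nat) \<Rightarrow> real"
  defines "A \<equiv> (multi_idx (2 * n) :: ('d \<Rightarrow> nat) set)"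
    and "\<mu> \<equiv> density lborel (\<lambda>x. ennreal (exp (- g x)))"
    and "c \<equiv> 1 + real CARD('d) / (2 * real n)"
  assumes n_pos: "n \<ge> 1"
    and g_form: "hom_form (2 * n) g"
    and g_nonneg: "\<And>x. g x \<ge> 0"
    and g_zero: "\<And>x. g x = 0 \<Longrightarrow> x = 0"
    and P_form: "\<And>\<alpha>. \<alpha> \<in> A \<Longrightarrow> hom_form (2 * n) (P \<alpha>)"
    and P_span: "\<And>f. hom_form (2 * n) f \<Longrightarrow> \<exists>a. \<forall>x. f x = (\<Sum>\<alpha>\<in>A. a \<alpha> * P \<alpha> x)"
    and P_orthonormal: "\<And>\<alpha> \<beta>. \<alpha> \<in> A \<Longrightarrow> \<beta> \<in> A \<Longrightarrow>
          (\<integral>x. P \<alpha> x * P \<beta> x \<partial>\<mu>) = (if \<alpha> = \<beta> then 1 else 0)"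
    and gt_coeffs: "\<And>x. g x = (\<Sum>\<alpha>\<in>A. gt \<alpha> * P \<alpha> x)"
  shows "(\<forall>\<alpha>\<in>A. gt \<alpha> = c * (\<integral>x. P \<alpha> x \<partial>\<mu>)
            \<and> gt \<alpha> = c * (\<integral>x. P \<alpha> x * exp (- (\<Sum>\<beta>\<in>A. P \<beta> x * gt \<beta>)) \<partial>lborel))
       \<and> (\<forall>x. g x = c * (\<Sum>\<alpha>\<in>A. P \<alpha> x * (\<integral>y. P \<alpha> y \<partial>\<mu>))
            \<and> g x = c * (\<integral>y. (\<Sum>\<alpha>\<in>A. P \<alpha> x * P \<alpha> y) \<partial>\<mu>))
       \<and> (\<forall>\<alpha>\<in>A. (\<integral>x. P \<alpha> x \<partial>\<mu>) =
            (\<integral>x. P \<alpha> x * exp (- (c * (\<Sum>\<beta>\<in>A. P \<beta> x * (\<integral>y. P \<beta> y \<partial>\<mu>)))) \<partial>lborel))"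
proof -
  have finA: "finite A" unfolding A_def by (rule finite_multi_idx)
  have n2: "2 * n > 0" using n_pos by simp
  have gm[measurable]: "g \<in> borel_measurable borel" by (rule hom_form_meas[OF g_form])
  have gpos: "\<And>x. x \<noteq> 0 \<Longrightarrow> g x > 0" using g_nonneg g_zero by (metis less_eq_real_def)
  have Pm: "\<And>\<alpha>. \<alpha> \<in> A \<Longrightarrow> P \<alpha> \<in> borel_measurable borel" by (rule hom_form_meas[OF P_form])
  have Pmu: "\<And>\<alpha>. \<alpha> \<in> A \<Longrightarrow> P \<alpha> \<in> borel_measurable \<mu>"
  proof -
    fix \<alpha> assume "\<alpha> \<in> A"
    note [measurable] = Pm[OF this]
    show "P \<alpha> \<in> borel_measurable \<mu>" unfolding \<mu>_def by measurable
  qed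
  have sq: "integrable \<mu> (\<lambda>x. P \<alpha> x * P \<alpha> x)" if "\<alpha> \<in> A" for \<alpha>
  proof (rule ccontr)
    assume "\<not> integrable \<mu> (\<lambda>x. P \<alpha> x * P \<alpha> x)"
    then have "(\<integral>x. P \<alpha> x * P \<alpha> x \<partial>\<mu>) = 0" by (rule not_integrable_integral_eq)
    then show False using P_orthonormal[OF that that] by simp
  qed
  have PP: "integrable \<mu> (\<lambda>x. P \<alpha> x * P \<beta> x)" if "\<alpha> \<in> A" "\<beta> \<in> A" for \<alpha> \<beta>
  proof (rule Bochner_Integration.integrable_bound[OF Bochner_Integration.integrable_add[OF sq[OF that(1)] sq[OF that(2)]]])
    show "(\<lambda>x. P \<alpha> x * P \<beta> x) \<in> borel_measurable \<mu>"
      using Pmu[OF that(1)] Pmu[OF that(2)] by measurable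
    show "AE x in \<mu>. norm (P \<alpha> x * P \<beta> x) \<le> norm (P \<alpha> x * P \<alpha> x + P \<beta> x * P \<beta> x)"
      using abs_prod_le by (intro AE_I2) (simp add: add_nonneg_nonneg)
  qed
  define S :: "(real^'d) set" where "S = cbox (\<chi> i. -1) (\<chi> i. 1)"
  have Sm[measurable]: "S \<in> sets borel" unfolding S_def by simp
  have intS: "integrable \<mu> (indicator S :: real^'d \<Rightarrow> real)"
  proof -
    have "emeasure \<mu> S = (\<integral>\<^sup>+x. ennreal (exp (- g x)) * indicator S x \<partial>lborel)"
      unfolding \<mu>_def by (rule emeasure_density) measurable
    also have "\<dots> \<le> (\<integral>\<^sup>+x. indicator S x \<partial>lborel)"
      by (intro nn_integral_mono) (auto simp: indicator_def g_nonneg)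
    also have "\<dots> = emeasure lborel S" by simp
    also have "\<dots> < \<infinity>" unfolding S_def by (intro emeasure_bounded_finite) simp
    finally have "emeasure \<mu> S < \<infinity>" .
    then show ?thesis unfolding integrable_indicator_iff using Sm
      by (simp add: \<mu>_def)
  qed
  have intpow: "integrable \<mu> (\<lambda>x. (x $ i) ^ (4 * n))" for i
  proof -
    define e :: "'d \<Rightarrow> nat" where "e = (\<lambda>j. if j = i then 2 * n else 0)"
    have eA: "e \<in> A" unfolding A_def multi_idx_def e_def by simp
    have me: "monom e x = (x $ i) ^ (2 * n)" for x
    proof -
      have "(\<lambda>j. (x $ j) ^ (e j)) = (\<lambda>j. if j = i then (x $ i) ^ (2 * n) else 1)"
        by (auto simp: e_def)
      then have "monom e x = (\<Prod>j\<in>UNIV. if j = i then (x $ i) ^ (2 * n) else 1)"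
        unfolding monom_def by metis
      then show ?thesis by simp
    qed
    have "hom_form (2 * n) (\<lambda>x. (x $ i) ^ (2 * n))"
      unfolding hom_form_def
    proof (intro exI allI)
      fix x :: "real^'d"
      show "(x $ i) ^ (2 * n) = (\<Sum>\<beta>\<in>(multi_idx (2 * n) :: ('d \<Rightarrow> nat) set). (if \<beta> = e then 1 else 0) * monom \<beta> x)"
      proof -
        have "(\<Sum>\<beta>\<in>(multi_idx (2 * n) :: ('d \<Rightarrow> nat) set). (if \<beta> = e then 1 else 0) * monom \<beta> x)
          = (\<Sum>\<beta>\<in>(multi_idx (2 * n) :: ('d \<Rightarrow> nat) set). if \<beta> = e then monom \<beta> x else 0)"
          by (rule sum.cong) auto
        also have "\<dots> = monom e x" using eA finA unfolding A_def by (simp add: sum.delta')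
        finally show ?thesis by (simp add: me)
      qed
    qed
    then obtain a where a: "\<And>x. (x $ i) ^ (2 * n) = (\<Sum>\<beta>\<in>A. a \<beta> * P \<beta> x)"
      using P_span by blast
    have "(\<lambda>x. (x $ i) ^ (4 * n)) = (\<lambda>x. \<Sum>\<beta>\<in>A. \<Sum>\<gamma>\<in>A. a \<beta> * a \<gamma> * (P \<beta> x * P \<gamma> x))"
    proof
      fix x :: "real^'d"
      have "(x $ i) ^ (4 * n) = (x $ i) ^ (2 * n) * (x $ i) ^ (2 * n)"
        by (simp add: power_add[symmetric])
      also have "\<dots> = (\<Sum>\<beta>\<in>A. \<Sum>\<gamma>\<in>A. a \<beta> * P \<beta> x * (a \<gamma> * P \<gamma> x))"
        unfolding a by (rule sum_product)
      finally show "(x $ i) ^ (4 * n) = (\<Sum>\<beta>\<in>A. \<Sum>\<gamma>\<in>A. a \<beta> * a \<gamma> * (P \<beta> x * P \<gamma> x))"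
        by (simp add: mult_ac)
    qed
    moreover have "integrable \<mu> (\<lambda>x. \<Sum>\<beta>\<in>A. \<Sum>\<gamma>\<in>A. a \<beta> * a \<gamma> * (P \<beta> x * P \<gamma> x))"
      by (intro Bochner_Integration.integrable_sum integrable_mult_right PP)
    ultimately show ?thesis by simp
  qed
  have one: "integrable \<mu> (\<lambda>x. 1 :: real)"
  proof (rule Bochner_Integration.integrable_bound[OF Bochner_Integration.integrable_add[OF intS Bochner_Integration.integrable_sum[OF intpow]]])
    show "(\<lambda>x. 1::real) \<in> borel_measurable \<mu>" by simp
    show "AE x in \<mu>. norm (1::real) \<le> norm (indicator S x + (\<Sum>i\<in>UNIV. (x $ i) ^ (4 * n)))"
    proof (intro AE_I2)
      fix x :: "real^'d"
      have nn: "\<And>i. (0::real) \<le> (x $ i) ^ (4 * n)"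
        by (simp add: zero_le_even_power)
      have "1 \<le> indicator S x + (\<Sum>i\<in>UNIV. (x $ i) ^ (4 * n))"
      proof (cases "x \<in> S")
        case True then show ?thesis using nn by (simp add: sum_nonneg)
      next
        case False
        then obtain i where "\<not> (-1 \<le> x $ i \<and> x $ i \<le> 1)"
          unfolding S_def mem_box_cart by auto
        then have "1 \<le> \<bar>x $ i\<bar>" by auto
        then have "1 \<le> \<bar>x $ i\<bar> ^ (4 * n)" by (rule one_le_power)
        then have "1 \<le> (x $ i) ^ (4 * n)" by (simp add: power_even_abs)
        also have "\<dots> \<le> (\<Sum>i\<in>UNIV. (x $ i) ^ (4 * n))"
          by (rule member_le_sum) (use nn in auto)
        finally show ?thesis using False by simp
      qed
      moreover have "0 \<le> indicator S x + (\<Sum>i\<in>UNIV. (x $ i) ^ (4 * n))"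
        using nn by (simp add: sum_nonneg)
      ultimately show "norm (1::real) \<le> norm (indicator S x + (\<Sum>i\<in>UNIV. (x $ i) ^ (4 * n)))"
        by simp
    qed
  qed
  have P1: "integrable \<mu> (P \<alpha>)" if "\<alpha> \<in> A" for \<alpha>
  proof (rule Bochner_Integration.integrable_bound[OF Bochner_Integration.integrable_add[OF one sq[OF that]]])
    show "P \<alpha> \<in> borel_measurable \<mu>" by (rule Pmu[OF that])
    show "AE x in \<mu>. norm (P \<alpha> x) \<le> norm (1 + P \<alpha> x * P \<alpha> x)"
      using abs_le_sq by (intro AE_I2) simp
  qed
  have gP: "integrable \<mu> (\<lambda>x. P \<alpha> x * g x)" if "\<alpha> \<in> A" for \<alpha>
  proof -
    have "(\<lambda>x. P \<alpha> x * g x) = (\<lambda>x. \<Sum>\<beta>\<in>A. gt \<beta> * (P \<alpha> x * P \<beta> x))"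
      by (simp add: fun_eq_iff gt_coeffs[symmetric] sum_distrib_left[symmetric] mult_ac)
      (simp add: gt_coeffs sum_distrib_left mult_ac)
    moreover have "integrable \<mu> (\<lambda>x. \<Sum>\<beta>\<in>A. gt \<beta> * (P \<alpha> x * P \<beta> x))"
      using that by (intro Bochner_Integration.integrable_sum integrable_mult_right PP)
    ultimately show ?thesis by simp
  qed
  have gt_eq: "gt \<alpha> = (\<integral>x. P \<alpha> x * g x \<partial>\<mu>)" if "\<alpha> \<in> A" for \<alpha>
  proof -
    have "(\<integral>x. P \<alpha> x * g x \<partial>\<mu>) = (\<integral>x. (\<Sum>\<beta>\<in>A. gt \<beta> * (P \<alpha> x * P \<beta> x)) \<partial>\<mu>)"
      by (rule Bochner_Integration.integral_cong) (simp_all add: gt_coeffs sum_distrib_left mult_ac)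
    also have "\<dots> = (\<Sum>\<beta>\<in>A. gt \<beta> * (\<integral>x. P \<alpha> x * P \<beta> x \<partial>\<mu>))"
      using that by (simp add: Bochner_Integration.integral_sum integrable_mult_right PP)
    also have "\<dots> = (\<Sum>\<beta>\<in>A. if \<beta> = \<alpha> then gt \<beta> else 0)"
      using that by (intro sum.cong) (auto simp: P_orthonormal)
    also have "\<dots> = gt \<alpha>" using that finA by (simp add: sum.delta')
    finally show ?thesis by simp
  qed
  have cdef: "c = real (2 * n + CARD('d)) / real (2 * n)"
    unfolding c_def using n2 by (simp add: field_simps)
  have keyP: "(\<integral>x. P \<alpha> x * g x \<partial>\<mu>) = c * (\<integral>x. P \<alpha> x \<partial>\<mu>)" if "\<alpha> \<in> A" for \<alpha>
    unfolding cdef \<mu>_def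
  proof (rule key_mu[OF Pm[OF that] gm _ _ n2 _ gpos g_nonneg])
    show "\<And>r x. 0 < r \<Longrightarrow> P \<alpha> (r *\<^sub>R x) = r ^ (2 * n) * P \<alpha> x"
      by (rule hom_form_scale[OF P_form[OF that]])
    show "\<And>r x. 0 < r \<Longrightarrow> g (r *\<^sub>R x) = r ^ (2 * n) * g x"
      by (rule hom_form_scale[OF g_form])
    show "P \<alpha> 0 = 0" by (rule hom_form_zero[OF P_form[OF that] n2])
    show "integrable (density lborel (\<lambda>x. ennreal (exp (- g x)))) (\<lambda>x. P \<alpha> x * g x)"
      using gP[OF that] by (simp add: \<mu>_def)
    show "integrable (density lborel (\<lambda>x. ennreal (exp (- g x)))) (P \<alpha>)"
      using P1[OF that] by (simp add: \<mu>_def)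
  qed
  have gtc: "gt \<alpha> = c * (\<integral>x. P \<alpha> x \<partial>\<mu>)" if "\<alpha> \<in> A" for \<alpha>
    using gt_eq[OF that] keyP[OF that] by simp
  have dens: "(\<integral>x. P \<alpha> x * exp (- g x) \<partial>lborel) = (\<integral>x. P \<alpha> x \<partial>\<mu>)" if "\<alpha> \<in> A" for \<alpha>
  proof -
    have Pl: "P \<alpha> \<in> borel_measurable lborel" using Pm[OF that] by simp
    have "(\<integral>x. P \<alpha> x \<partial>\<mu>) = (\<integral>x. exp (- g x) *\<^sub>R P \<alpha> x \<partial>lborel)"
      unfolding \<mu>_def by (rule integral_density[OF Pl, where g="\<lambda>x. exp (- g x)"]) auto
    then show ?thesis by (simp add: mult_ac)
  qed
  have gsum: "(\<Sum>\<beta>\<in>A. P \<beta> x * gt \<beta>) = g x" for x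
    by (simp add: gt_coeffs mult_ac)
  have g2: "g x = c * (\<Sum>\<alpha>\<in>A. P \<alpha> x * (\<integral>y. P \<alpha> y \<partial>\<mu>))" for x
    unfolding gt_coeffs sum_distrib_left
    by (rule sum.cong) (simp_all add: gtc mult_ac)
  have Kint: "(\<integral>y. (\<Sum>\<alpha>\<in>A. P \<alpha> x * P \<alpha> y) \<partial>\<mu>) = (\<Sum>\<alpha>\<in>A. P \<alpha> x * (\<integral>y. P \<alpha> y \<partial>\<mu>))" for x
    by (simp add: Bochner_Integration.integral_sum integrable_mult_right P1)
  show ?thesis
  proof (intro conjI ballI allI)
    fix \<alpha> assume a: "\<alpha> \<in> A"
    show "gt \<alpha> = c * (\<integral>x. P \<alpha> x \<partial>\<mu>)" by (rule gtc[OF a])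
    show "gt \<alpha> = c * (\<integral>x. P \<alpha> x * exp (- (\<Sum>\<beta>\<in>A. P \<beta> x * gt \<beta>)) \<partial>lborel)"
      by (simp only: gsum dens[OF a] gtc[OF a])
    show "(\<integral>x. P \<alpha> x \<partial>\<mu>) = (\<integral>x. P \<alpha> x * exp (- (c * (\<Sum>\<beta>\<in>A. P \<beta> x * (\<integral>y. P \<beta> y \<partial>\<mu>)))) \<partial>lborel)"
      by (simp only: g2[symmetric] dens[OF a])
  next
    fix x
    show "g x = c * (\<Sum>\<alpha>\<in>A. P \<alpha> x * (\<integral>y. P \<alpha> y \<partial>\<mu>))" by (rule g2)
    show "g x = c * (\<integral>y. (\<Sum>\<alpha>\<in>A. P \<alpha> x * P \<alpha> y) \<partial>\<mu>)" by (simp only: Kint g2[symmetric])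
  qed
qed

end
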